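(* Let $\kappa$ be a regular infinite cardinal and $\mu$ a singular cardinal with $\mathrm{cf}(\mu)=\kappa$. Then $w({}^{\kappa}\mu,\mathrm{bd})=\mu^{<\kappa}$, $w({}^{\mu}2,\mathrm{bd})=w({}^{\mu}\kappa,\mathrm{bd})=2^{<\mu}$, and $w({}^{\mu}\mu,\mathrm{bd})=\mu^{<\mu}$. Furthermore, for each $X\in\{{}^{\kappa}\mu,{}^{\mu}2,{}^{\mu}\kappa,{}^{\mu}\mu\}$, the space $(X,\mathrm{bd})$ has an open partition of cardinality $w(X,\mathrm{bd})$.
   Context: For ordinals $\delta,\rho$, ${}^{\delta}\rho$ is the set of functions $\delta\to\rho$; for a partial function $s\colon\delta\rightharpoonup\rho$, $[s]=\{f\in{}^{\delta}\rho: s\subseteq f\}$. The bounded topology on ${}^{\delta}\rho$ has base $\{[s]: s\in{}^{\alpha}\rho,\ \alpha<\delta\}$; $(X,\mathrm{bd})$ denotes $X$ with this topology. $w(X,\tau)$ is the weight (least size of a base). An open partition of a space is a family of pairwise disjoint nonempty open sets whose union is the whole space. *)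

theory Defs
  imports "HOL-Analysis.Analysis"
begin

unbundle cardinal_syntax

text \<open>Ordinals are represented by well-orders (here: cardinal orders) r; the ordinals
  below the ordinal of r are the elements alpha of Field r, and the ordinal alpha itself is
  represented by its initial segment underS r alpha.  The space of functions delta -> rho is
  the set of extensional functions Field r -> R.\<close>

definition fun_space :: "'a rel \<Rightarrow> 'b set \<Rightarrow> ('a \<Rightarrow> 'b) set" where
  "fun_space r R = (Field r \<rightarrow>\<^sub>E R)"

definition bd_basic :: "'a rel \<Rightarrow> 'b set \<Rightarrow> 'a \<Rightarrow> ('a \<Rightarrow> 'b) \<Rightarrow> ('a \<Rightarrow> 'b) set" where
  "bd_basic r R \<alpha> s = {f \<in> fun_space r R. \<forall>\<beta> \<in> underS r \<alpha>. f \<beta> = s \<beta>}"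

definition bd_base :: "'a rel \<Rightarrow> 'b set \<Rightarrow> ('a \<Rightarrow> 'b) set set" where
  "bd_base r R = {bd_basic r R \<alpha> s | \<alpha> s. \<alpha> \<in> Field r \<and> s \<in> (underS r \<alpha> \<rightarrow>\<^sub>E R)}"

definition bd_top :: "'a rel \<Rightarrow> 'b set \<Rightarrow> ('a \<Rightarrow> 'b) topology" where
  "bd_top r R = topology_generated_by (bd_base r R)"

definition is_base :: "'x topology \<Rightarrow> 'x set set \<Rightarrow> bool" where
  "is_base T B \<longleftrightarrow> (\<forall>U\<in>B. openin T U) \<and>
     (\<forall>U. openin T U \<longrightarrow> (\<exists>C \<subseteq> B. \<Union>C = U))"

definition is_weight :: "'x topology \<Rightarrow> 'y set \<Rightarrow> bool" where
  "is_weight T L \<longleftrightarrow> (\<exists>B. is_base T B \<and> |B| =o |L| ) \<and>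
     (\<forall>B. is_base T B \<longrightarrow> |L| \<le>o |B| )"

definition is_card_sup :: "'i set \<Rightarrow> ('i \<Rightarrow> 'x set) \<Rightarrow> 'y set \<Rightarrow> bool" where
  "is_card_sup I A L \<longleftrightarrow> (\<forall>i\<in>I. |A i| \<le>o |L| ) \<and>
     (\<forall>C :: 'x set. (\<forall>i\<in>I. |A i| \<le>o |C| ) \<longrightarrow> |L| \<le>o |C| )"

text \<open>|L| = rho^{<delta} = sup of |rho^alpha| over ordinals alpha < delta.\<close>
definition is_cexp_less :: "'b set \<Rightarrow> 'a rel \<Rightarrow> 'y set \<Rightarrow> bool" where
  "is_cexp_less R r L \<longleftrightarrow> is_card_sup (Field r) (\<lambda>\<alpha>. underS r \<alpha> \<rightarrow>\<^sub>E R) L"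

definition open_partition :: "'x topology \<Rightarrow> 'x set set \<Rightarrow> bool" where
  "open_partition T P \<longleftrightarrow> (\<forall>U\<in>P. openin T U \<and> U \<noteq> {}) \<and>
     (\<forall>U\<in>P. \<forall>V\<in>P. U \<noteq> V \<longrightarrow> U \<inter> V = {}) \<and> \<Union>P = topspace T"

definition cof_is :: "'b rel \<Rightarrow> 'a rel \<Rightarrow> bool" where
  "cof_is m k \<longleftrightarrow> (\<exists>K \<subseteq> Field m. cofinal K m \<and> |K| =o k) \<and>
     (\<forall>K \<subseteq> Field m. cofinal K m \<longrightarrow> k \<le>o |K| )"

definition weight_cexp_partition :: "'x topology \<Rightarrow> 'b set \<Rightarrow> 'a rel \<Rightarrow> bool" where
  "weight_cexp_partition T R r \<longleftrightarrow>
     (\<exists>L :: 'x set set. is_weight T L \<and> is_cexp_less R r L \<and>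
        (\<exists>P. open_partition T P \<and> |P| =o |L| ))"

end

theory Submission
  imports Defs
begin

lemma wo_total:
  assumes "Well_order r" "a \<in> Field r" "b \<in> Field r"
  shows "(a,b) \<in> r \<or> (b,a) \<in> r"
  using wo_rel.TOTALS[of r] assms unfolding wo_rel_def by blast

lemma wo_trans: "Well_order r \<Longrightarrow> (a,b) \<in> r \<Longrightarrow> (b,c) \<in> r \<Longrightarrow> (a,c) \<in> r"
  using wo_rel.TRANS[of r] unfolding wo_rel_def trans_def by blast

lemma wo_antisym: "Well_order r \<Longrightarrow> (a,b) \<in> r \<Longrightarrow> (b,a) \<in> r \<Longrightarrow> a = b"
  using wo_rel.ANTISYM[of r] unfolding wo_rel_def antisym_def by blast

lemma underS_mono_le:
  assumes "Well_order r" "(a,b) \<in> r"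
  shows "underS r a \<subseteq> underS r b"
proof
  fix x assume "x \<in> underS r a"
  then have x: "(x,a) \<in> r" "x \<noteq> a" unfolding underS_def by auto
  have "(x,b) \<in> r" using wo_trans[OF assms(1) x(1) assms(2)] .
  moreover have "x \<noteq> b" using x wo_antisym[OF assms(1), of x a] assms(2) by auto
  ultimately show "x \<in> underS r b" unfolding underS_def by auto
qed

lemma bd_basic_sub_fun: "bd_basic r R a s \<subseteq> fun_space r R"
  unfolding bd_basic_def by (rule Collect_restrict)

lemma bd_basic_mono:
  assumes "Well_order r" "(a,b) \<in> r" "f \<in> bd_basic r R a s" "f \<in> bd_basic r R b s'"
  shows "bd_basic r R b s' \<subseteq> bd_basic r R a s"
proof
  fix g assume g: "g \<in> bd_basic r R b s'"
  have sub: "underS r a \<subseteq> underS r b" using underS_mono_le[OF assms(1,2)] .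
  show "g \<in> bd_basic r R a s"
    unfolding bd_basic_def
  proof (safe)
    show "g \<in> fun_space r R" using g unfolding bd_basic_def by auto
    fix x assume x: "x \<in> underS r a"
    then have "x \<in> underS r b" using sub by auto
    then have "g x = s' x" "f x = s' x" using g assms(4) unfolding bd_basic_def by auto
    moreover have "f x = s x" using x assms(3) unfolding bd_basic_def by auto
    ultimately show "g x = s x" by simp
  qed
qed

lemma restrict_in_bd_basic:
  assumes "f \<in> fun_space r R"
  shows "f \<in> bd_basic r R a (restrict f (underS r a))"
    "restrict f (underS r a) \<in> (underS r a \<rightarrow>\<^sub>E R)"
proof -
  have sub: "underS r a \<subseteq> Field r" by (auto simp: underS_def Field_def)
  show "f \<in> bd_basic r R a (restrict f (underS r a))"
    using assms unfolding bd_basic_def fun_space_def by auto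
  show "restrict f (underS r a) \<in> (underS r a \<rightarrow>\<^sub>E R)"
    using assms sub unfolding fun_space_def by (auto intro: PiE_mem)
qed

lemma Union_bd_base:
  assumes "a \<in> Field r"
  shows "\<Union>(bd_base r R) = fun_space r R"
proof
  show "\<Union>(bd_base r R) \<subseteq> fun_space r R" unfolding bd_base_def using bd_basic_sub_fun by fastforce
  show "fun_space r R \<subseteq> \<Union>(bd_base r R)"
  proof
    fix f assume f: "f \<in> fun_space r R"
    show "f \<in> \<Union>(bd_base r R)" unfolding bd_base_def
      using restrict_in_bd_basic[OF f, of a] assms by blast
  qed
qed

lemma topspace_bd:
  assumes "a \<in> Field r"
  shows "topspace (bd_top r R) = fun_space r R"
  unfolding bd_top_def using Union_bd_base[OF assms] by simp

lemma bd_base_is_base: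
  assumes wo: "Well_order r"
  shows "is_base (bd_top r R) (bd_base r R)"
  unfolding is_base_def
proof safe
  fix U assume "U \<in> bd_base r R"
  then show "openin (bd_top r R) U" unfolding bd_top_def by (rule topology_generated_by_Basis)
next
  fix U assume "openin (bd_top r R) U"
  then have g: "generate_topology_on (bd_base r R) U"
    unfolding bd_top_def by (rule openin_topology_generated_by)
  have "\<forall>x\<in>U. \<exists>V\<in>bd_base r R. x \<in> V \<and> V \<subseteq> U"
    using g
  proof (induction rule: generate_topology_on.induct)
    case Empty
    then show ?case by simp
  next
    case (Int a b)
    show ?case
    proof
      fix x assume x: "x \<in> a \<inter> b"
      then obtain V1 V2 where V: "V1 \<in> bd_base r R" "x \<in> V1" "V1 \<subseteq> a"
        "V2 \<in> bd_base r R" "x \<in> V2" "V2 \<subseteq> b" using Int.IH by blast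
      from V(1) obtain \<alpha> s where V1: "V1 = bd_basic r R \<alpha> s" "\<alpha> \<in> Field r"
        unfolding bd_base_def by blast
      from V(4) obtain \<beta> s' where V2: "V2 = bd_basic r R \<beta> s'" "\<beta> \<in> Field r"
        unfolding bd_base_def by blast
      show "\<exists>V\<in>bd_base r R. x \<in> V \<and> V \<subseteq> a \<inter> b"
      proof (cases "(\<alpha>,\<beta>) \<in> r")
        case True
        then have "V2 \<subseteq> V1" using bd_basic_mono[OF wo True] V V1 V2 by blast
        then show ?thesis using V by blast
      next
        case False
        then have "(\<beta>,\<alpha>) \<in> r" using wo_total[OF wo V1(2) V2(2)] by blast
        then have "V1 \<subseteq> V2" using bd_basic_mono[OF wo] V V1 V2 by blast
        then show ?thesis using V by blast
      qed
    qed
  next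
    case (UN K)
    show ?case
    proof
      fix x assume "x \<in> \<Union>K"
      then obtain k where k: "k \<in> K" "x \<in> k" by blast
      then obtain V where "V \<in> bd_base r R" "x \<in> V" "V \<subseteq> k" using UN.IH by blast
      then show "\<exists>V\<in>bd_base r R. x \<in> V \<and> V \<subseteq> \<Union>K" using k by blast
    qed
  next
    case (Basis s)
    show ?case
    proof
      fix x assume "x \<in> s"
      then show "\<exists>V\<in>bd_base r R. x \<in> V \<and> V \<subseteq> s" using Basis by blast
    qed
  qed
  then have "\<Union>{V \<in> bd_base r R. V \<subseteq> U} = U" by blast
  then show "\<exists>C\<subseteq>bd_base r R. \<Union>C = U"
    by (intro exI[of _ "{V \<in> bd_base r R. V \<subseteq> U}"]) simp
qed

lemma partition_le_base:
  assumes B: "is_base T B" and P: "open_partition T P"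
  shows "|P| \<le>o |B|"
proof -
  have ex: "\<exists>V. V \<in> B \<and> V \<noteq> {} \<and> V \<subseteq> U" if U: "U \<in> P" for U
  proof -
    have "openin T U" "U \<noteq> {}" using P U unfolding open_partition_def by auto
    then obtain C where "C \<subseteq> B" "\<Union>C = U" using B unfolding is_base_def by blast
    then show ?thesis using \<open>U \<noteq> {}\<close> by blast
  qed
  define h where "h U = (SOME V. V \<in> B \<and> V \<noteq> {} \<and> V \<subseteq> U)" for U
  have h: "h U \<in> B \<and> h U \<noteq> {} \<and> h U \<subseteq> U" if "U \<in> P" for U
    unfolding h_def using someI_ex[OF ex[OF that]] .
  have "inj_on h P"
  proof (rule inj_onI)
    fix U U' assume "U \<in> P" "U' \<in> P" "h U = h U'"
    then have "U \<inter> U' \<noteq> {}" using h by blast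
    then show "U = U'" using P \<open>U \<in> P\<close> \<open>U' \<in> P\<close> unfolding open_partition_def by blast
  qed
  moreover have "h ` P \<subseteq> B" using h by blast
  ultimately show ?thesis using card_of_ordLeq by blast
qed


lemma Card_order_wo: "Card_order r \<Longrightarrow> Well_order r"
  using card_order_on_well_order_on by blast

lemma card_less_underS:
  assumes cr: "Card_order r" and lt: "|X| <o |Field r|"
  shows "\<exists>\<alpha>\<in>Field r. |X| =o |underS r \<alpha>|"
proof -
  have wo: "Well_order r" using Card_order_wo[OF cr] .
  have "|X| <o r" using ordLess_ordIso_trans[OF lt card_of_Field_ordIso[OF cr]] .
  then obtain \<alpha> where a: "\<alpha> \<in> Field r" "|X| =o Restr r (underS r \<alpha>)"
    using ordLess_iff_ordIso_Restr[OF wo card_of_Well_order[of X]] by blast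
  have "|Field |X|| =o |Field (Restr r (underS r \<alpha>))|" using card_of_cong[OF a(2)] .
  moreover have "Field (Restr r (underS r \<alpha>)) = underS r \<alpha>"
    using Field_Restr_ofilter[OF wo wo_rel.underS_ofilter] wo unfolding wo_rel_def by blast
  ultimately have "|X| =o |underS r \<alpha>|" by (simp add: Field_card_of)
  then show ?thesis using a(1) by blast
qed

lemma Pow_le_PiE:
  assumes "r0 \<noteq> r1" "r0 \<in> R" "r1 \<in> R"
  shows "|Pow A| \<le>o |A \<rightarrow>\<^sub>E R|"
proof -
  define h where "h X = (\<lambda>a\<in>A. if a \<in> X then r1 else r0)" for X
  have "inj_on h (Pow A)"
  proof (rule inj_onI)
    fix X Y assume XY: "X \<in> Pow A" "Y \<in> Pow A" "h X = h Y"
    show "X = Y"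
    proof (rule set_eqI)
      fix a
      show "a \<in> X \<longleftrightarrow> a \<in> Y"
      proof (cases "a \<in> A")
        case True
        have "h X a = h Y a" using XY(3) by simp
        then show ?thesis using True assms(1) unfolding h_def by (auto split: if_splits)
      next
        case False
        then show ?thesis using XY(1,2) by blast
      qed
    qed
  qed
  moreover have "h ` Pow A \<subseteq> (A \<rightarrow>\<^sub>E R)" using assms unfolding h_def by auto
  ultimately show ?thesis using card_of_ordLeq by blast
qed

lemma Field_le_sup:
  assumes cr: "Card_order r" and R: "r0 \<noteq> r1" "r0 \<in> R" "r1 \<in> R"
    and le: "\<forall>\<alpha>\<in>Field r. |underS r \<alpha> \<rightarrow>\<^sub>E R| \<le>o |C|"
  shows "|Field r| \<le>o |C|"
proof (rule ccontr)
  assume "\<not> |Field r| \<le>o |C|"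
  then have "|C| <o |Field r|"
    using not_ordLeq_iff_ordLess[OF card_of_Well_order card_of_Well_order] by blast
  then obtain \<alpha> where a: "\<alpha> \<in> Field r" "|C| =o |underS r \<alpha>|"
    using card_less_underS[OF cr] by blast
  have "|Pow (underS r \<alpha>)| \<le>o |underS r \<alpha> \<rightarrow>\<^sub>E R|" using Pow_le_PiE[OF R] .
  also have "|underS r \<alpha> \<rightarrow>\<^sub>E R| \<le>o |C|" using le a(1) by simp
  also have "|C| \<le>o |underS r \<alpha>|" using ordIso_imp_ordLeq[OF a(2)] .
  finally have "|Pow (underS r \<alpha>)| \<le>o |underS r \<alpha>|" .
  then show False using not_ordLess_ordLeq[OF card_of_Pow] by blast
qed

lemma Sigma_le_sup:
  assumes cr: "Card_order r" and inf: "infinite (Field r)"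
    and R: "r0 \<noteq> r1" "r0 \<in> R" "r1 \<in> R"
    and le: "\<forall>\<alpha>\<in>Field r. |underS r \<alpha> \<rightarrow>\<^sub>E R| \<le>o |C|"
  shows "|Sigma (Field r) (\<lambda>\<alpha>. underS r \<alpha> \<rightarrow>\<^sub>E R)| \<le>o |C|"
proof -
  have F: "|Field r| \<le>o |C|" using Field_le_sup[OF cr R le] .
  then have "infinite C" using card_of_ordLeq_infinite[OF F inf] by blast
  then show ?thesis using card_of_Sigma_ordLeq_infinite[OF _ F le] by blast
qed

lemma strict_above:
  assumes cr: "Card_order r" and inf: "infinite (Field r)" and a: "a \<in> Field r"
  shows "\<exists>b\<in>Field r. (a,b) \<in> r \<and> a \<noteq> b"
proof -
  have wo: "Well_order r" using Card_order_wo[OF cr] .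
  have "Field r \<noteq> under r a" using Card_order_infinite_not_under[OF cr inf] by blast
  moreover have "under r a \<subseteq> Field r" by (auto simp: under_def Field_def)
  ultimately obtain b where b: "b \<in> Field r" "b \<notin> under r a" by blast
  then have nba: "(b,a) \<notin> r" by (simp add: under_def)
  then have "(a,b) \<in> r" using wo_total[OF wo a b(1)] by blast
  moreover have "a \<noteq> b"
  proof
    assume "a = b"
    then have "(b,a) \<in> r" using wo a unfolding well_order_on_def linear_order_on_def
        partial_order_on_def preorder_on_def refl_on_def by simp
    then show False using nba by simp
  qed
  ultimately show ?thesis using b(1) by blast
qed

lemma refl_wo: "Well_order r \<Longrightarrow> a \<in> Field r \<Longrightarrow> (a,a) \<in> r"
  unfolding well_order_on_def linear_order_on_def
        partial_order_on_def preorder_on_def refl_on_def by simp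

lemma above_two:
  assumes cr: "Card_order r" and inf: "infinite (Field r)" and a: "a \<in> Field r" and g: "g \<in> Field r"
  shows "\<exists>i\<in>Field r. (a,i) \<in> r \<and> (g,i) \<in> r \<and> i \<noteq> g"
proof -
  have wo: "Well_order r" using Card_order_wo[OF cr] .
  obtain c where c: "c \<in> Field r" "(a,c) \<in> r" "(g,c) \<in> r"
  proof (cases "(a,g) \<in> r")
    case True
    then show ?thesis using that[of g] g refl_wo[OF wo g] by blast
  next
    case False
    then have "(g,a) \<in> r" using wo_total[OF wo a g] by blast
    then show ?thesis using that[of a] a refl_wo[OF wo a] by blast
  qed
  obtain i where i: "i \<in> Field r" "(c,i) \<in> r" "c \<noteq> i" using strict_above[OF cr inf c(1)] by blast
  have ai: "(a,i) \<in> r" using wo_trans[OF wo c(2) i(2)] .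
  have gi: "(g,i) \<in> r" using wo_trans[OF wo c(3) i(2)] .
  have "i \<noteq> g"
  proof
    assume "i = g"
    then have "(i,c) \<in> r" using c(3) by simp
    then show False using wo_antisym[OF wo i(2)] i(3) by simp
  qed
  then show ?thesis using i(1) ai gi by blast
qed

lemma shift_lemma:
  assumes cr: "Card_order r" and inf: "infinite (Field r)" and g: "g \<in> Field r" and a: "a \<in> Field r"
  shows "\<exists>z\<in>Field r. |underS r a| \<le>o |underS r z - underS r g|"
proof -
  have wo: "Well_order r" using Card_order_wo[OF cr] .
  define X where "X = underS r g"
  define W where "W = Restr r (Field r - X)"
  have woW: "Well_order W" unfolding W_def using Well_order_Restr[OF wo] .
  have reflr: "Refl r" using wo unfolding well_order_on_def linear_order_on_def
        partial_order_on_def preorder_on_def by simp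
  have FW: "Field W = Field r - X" unfolding W_def using Refl_Field_Restr2[OF reflr] by blast
  have Xlt: "|X| <o |Field r|"
    unfolding X_def using ordLess_ordIso_trans[OF card_of_underS[OF cr g]
      ordIso_symmetric[OF card_of_Field_ordIso[OF cr]]] .
  have "|Field r| \<le>o |Field r - X|"
  proof (rule ccontr)
    assume "\<not> |Field r| \<le>o |Field r - X|"
    then have "|Field r - X| <o |Field r|"
      using not_ordLeq_iff_ordLess[OF card_of_Well_order card_of_Well_order] by blast
    then have "|(Field r - X) \<union> X| <o |Field r|"
      using card_of_Un_ordLess_infinite[OF inf _ Xlt, of "Field r - X"] by (simp only:)
    moreover have "(Field r - X) \<union> X = Field r" unfolding X_def by (auto simp: underS_def Field_def)
    ultimately have "|Field r| <o |Field r|" by simp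
    then show False using ordLess_irreflexive by metis
  qed
  then have "|Field r| \<le>o |Field W|" using FW by simp
  moreover have "|Field W| \<le>o W" using card_of_least[OF woW] .
  ultimately have "|Field r| \<le>o W" using ordLeq_transitive by metis
  then have "r \<le>o W" by (rule ordIso_ordLeq_trans[OF ordIso_symmetric[OF card_of_Field_ordIso[OF cr]]])
  then obtain f where f: "embed r W f" unfolding ordLeq_def by blast
  have bij: "bij_betw f (underS r a) (underS W (f a))" using embed_underS[OF wo f a] .
  have fa: "f a \<in> Field W" using embed_Field[OF f] a by blast
  then have fa': "f a \<in> Field r" using FW by blast
  have sub: "underS W (f a) \<subseteq> underS r (f a) - X"
  proof
    fix x assume "x \<in> underS W (f a)"
    then have "(x, f a) \<in> W" "x \<noteq> f a" unfolding underS_def by auto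
    then have "(x, f a) \<in> r" "x \<notin> X" "x \<noteq> f a" unfolding W_def by auto
    then show "x \<in> underS r (f a) - X" unfolding underS_def by auto
  qed
  have "inj_on f (underS r a)" "f ` underS r a \<subseteq> underS r (f a) - X"
    using bij sub unfolding bij_betw_def by auto
  then have "|underS r a| \<le>o |underS r (f a) - underS r g|" using card_of_ordLeq[of "underS r a"] unfolding X_def by blast
  then show ?thesis using fa' by blast
qed


lemma ext_in_basic:
  assumes s: "s \<in> (underS r a \<rightarrow>\<^sub>E R)" and r0: "r0 \<in> R"
  shows "(\<lambda>x\<in>Field r. if x \<in> underS r a then s x else r0) \<in> bd_basic r R a s"
proof -
  have sub: "underS r a \<subseteq> Field r" by (auto simp: underS_def Field_def)
  have "(\<lambda>x\<in>Field r. if x \<in> underS r a then s x else r0) \<in> fun_space r R"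
    unfolding fun_space_def restrict_PiE_iff using s r0 by auto
  then show ?thesis unfolding bd_basic_def using sub by auto
qed

lemma bd_basic_nonempty:
  assumes s: "s \<in> (underS r a \<rightarrow>\<^sub>E R)" and r0: "r0 \<in> R"
  shows "bd_basic r R a s \<noteq> {}"
  using ext_in_basic[OF s r0] by blast

lemma in_basicD: "f \<in> bd_basic r R a s \<Longrightarrow> \<beta> \<in> underS r a \<Longrightarrow> f \<beta> = s \<beta>"
  unfolding bd_basic_def by auto

lemma bd_basic_inj:
  assumes s: "s \<in> (underS r a \<rightarrow>\<^sub>E R)" and s': "s' \<in> (underS r a \<rightarrow>\<^sub>E R)" and r0: "r0 \<in> R"
    and eq: "bd_basic r R a s = bd_basic r R a s'"
  shows "s = s'"
proof (rule PiE_ext[OF s s'])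
  fix \<beta> assume b: "\<beta> \<in> underS r a"
  have f: "(\<lambda>x\<in>Field r. if x \<in> underS r a then s x else r0) \<in> bd_basic r R a s'"
    using ext_in_basic[OF s r0] eq by simp
  have "s \<beta> = (\<lambda>x\<in>Field r. if x \<in> underS r a then s x else r0) \<beta>"
    using b by (auto simp: underS_def Field_def)
  also have "\<dots> = s' \<beta>" using in_basicD[OF f b] .
  finally show "s \<beta> = s' \<beta>" .
qed

lemma partition_exists:
  assumes cr: "Card_order r" and inf: "infinite (Field r)"
    and R: "r0 \<noteq> r1" "r0 \<in> R" "r1 \<in> R"
    and g: "\<gamma> \<in> Field r"
    and I: "I \<subseteq> Field r" "\<forall>i\<in>I. (\<gamma>,i) \<in> r \<and> i \<noteq> \<gamma>"
    and cof: "\<forall>a\<in>Field r. \<exists>i\<in>I. (a,i) \<in> r"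
    and t: "inj_on t I" "t ` I \<subseteq> (underS r \<gamma> \<rightarrow>\<^sub>E R)"
  shows "\<exists>P. open_partition (bd_top r R) P \<and> P \<subseteq> bd_base r R \<and>
     |Sigma (Field r) (\<lambda>\<alpha>. underS r \<alpha> \<rightarrow>\<^sub>E R)| \<le>o |P|"
proof -
  have wo: "Well_order r" using Card_order_wo[OF cr] .
  define P1 where "P1 = {bd_basic r R i s | i s. i \<in> I \<and> s \<in> (underS r i \<rightarrow>\<^sub>E R) \<and>
     (\<forall>\<beta>\<in>underS r \<gamma>. s \<beta> = t i \<beta>)}"
  define P2 where "P2 = {bd_basic r R \<gamma> u | u. u \<in> (underS r \<gamma> \<rightarrow>\<^sub>E R) \<and> u \<notin> t ` I}"
  define P where "P = P1 \<union> P2"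
  have gsub: "underS r \<gamma> \<subseteq> underS r i" if "i \<in> I" for i
    using underS_mono_le[OF wo] I(2) that by blast
  have tI: "t i \<in> (underS r \<gamma> \<rightarrow>\<^sub>E R)" if "i \<in> I" for i using t(2) that by blast
  have inP: "bd_basic r R \<alpha> s \<in> bd_base r R \<and> bd_basic r R \<alpha> s \<noteq> {}"
    if "\<alpha> \<in> Field r" "s \<in> (underS r \<alpha> \<rightarrow>\<^sub>E R)" for \<alpha> s
    using that bd_basic_nonempty[OF that(2) R(2)] unfolding bd_base_def by blast
  have PP: "U \<in> bd_base r R \<and> U \<noteq> {}" if U: "U \<in> P" for U
  proof (cases "U \<in> P1")
    case True
    then obtain i s where "U = bd_basic r R i s" "i \<in> I" "s \<in> (underS r i \<rightarrow>\<^sub>E R)"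
      unfolding P1_def by blast
    then show ?thesis using inP[of i s] I(1) by blast
  next
    case False
    then have "U \<in> P2" using U unfolding P_def by blast
    then obtain u where "U = bd_basic r R \<gamma> u" "u \<in> (underS r \<gamma> \<rightarrow>\<^sub>E R)"
      unfolding P2_def by blast
    then show ?thesis using inP[of \<gamma> u] g by blast
  qed
  have Psub: "P \<subseteq> bd_base r R" using PP by blast
  have Pne: "U \<noteq> {}" if "U \<in> P" for U using PP that by blast
  have disj: "U \<inter> V = {}" if UV: "U \<in> P" "V \<in> P" "U \<noteq> V" for U V
  proof (rule ccontr)
    assume "U \<inter> V \<noteq> {}"
    then obtain f where f: "f \<in> U" "f \<in> V" by blast
    have P1P1: False if U1: "U = bd_basic r R i s" "i \<in> I" "s \<in> (underS r i \<rightarrow>\<^sub>E R)"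
        "\<forall>\<beta>\<in>underS r \<gamma>. s \<beta> = t i \<beta>"
      and V1: "V = bd_basic r R j s'" "j \<in> I" "s' \<in> (underS r j \<rightarrow>\<^sub>E R)"
        "\<forall>\<beta>\<in>underS r \<gamma>. s' \<beta> = t j \<beta>" for i s j s'
    proof -
      have "t i \<beta> = t j \<beta>" if b: "\<beta> \<in> underS r \<gamma>" for \<beta>
      proof -
        have "t i \<beta> = s \<beta>" using U1(4) b by simp
        also have "\<dots> = f \<beta>" using in_basicD[of f r R i s \<beta>] f(1) U1(1) gsub[OF U1(2)] b by auto
        also have "\<dots> = s' \<beta>" using in_basicD[of f r R j s' \<beta>] f(2) V1(1) gsub[OF V1(2)] b by auto
        also have "\<dots> = t j \<beta>" using V1(4) b by simp
        finally show ?thesis .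
      qed
      then have "t i = t j" using PiE_ext[OF tI[OF U1(2)] tI[OF V1(2)]] by blast
      then have ij: "i = j" using t(1) U1(2) V1(2) unfolding inj_on_def by blast
      have "s \<beta> = s' \<beta>" if b: "\<beta> \<in> underS r i" for \<beta>
      proof -
        have "s \<beta> = f \<beta>" using in_basicD[of f r R i s \<beta>] f(1) U1(1) b by auto
        also have "\<dots> = s' \<beta>" using in_basicD[of f r R j s' \<beta>] f(2) V1(1) b ij by auto
        finally show ?thesis .
      qed
      then have "s = s'" using PiE_ext[OF U1(3)] V1(3) ij by blast
      then have "U = V" using U1(1) V1(1) ij by simp
      then show False using UV(3) by simp
    qed
    have P1P2: False if U1: "f \<in> bd_basic r R i s" "i \<in> I"
        "\<forall>\<beta>\<in>underS r \<gamma>. s \<beta> = t i \<beta>"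
      and V1: "f \<in> bd_basic r R \<gamma> u" "u \<in> (underS r \<gamma> \<rightarrow>\<^sub>E R)" "u \<notin> t ` I" for i s u
    proof -
      have "u \<beta> = t i \<beta>" if b: "\<beta> \<in> underS r \<gamma>" for \<beta>
      proof -
        have "u \<beta> = f \<beta>" using in_basicD[OF V1(1) b] by simp
        also have "\<dots> = s \<beta>" using in_basicD[OF U1(1)] gsub[OF U1(2)] b by auto
        also have "\<dots> = t i \<beta>" using U1(3) b by simp
        finally show ?thesis .
      qed
      then have "u = t i" using PiE_ext[OF V1(2) tI[OF U1(2)]] by blast
      then show False using V1(3) U1(2) by blast
    qed
    have P2P2: False if U1: "U = bd_basic r R \<gamma> u" "u \<in> (underS r \<gamma> \<rightarrow>\<^sub>E R)"
      and V1: "V = bd_basic r R \<gamma> u'" "u' \<in> (underS r \<gamma> \<rightarrow>\<^sub>E R)" for u u'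
    proof -
      have "u \<beta> = u' \<beta>" if b: "\<beta> \<in> underS r \<gamma>" for \<beta>
        using in_basicD[of f r R \<gamma> u \<beta>] in_basicD[of f r R \<gamma> u' \<beta>] f U1(1) V1(1) b by simp
      then have "u = u'" using PiE_ext[OF U1(2) V1(2)] by blast
      then show False using UV(3) U1(1) V1(1) by simp
    qed
    show False
    proof (cases "U \<in> P1")
      case U: True
      then obtain i s where U1: "U = bd_basic r R i s" "i \<in> I" "s \<in> (underS r i \<rightarrow>\<^sub>E R)"
        "\<forall>\<beta>\<in>underS r \<gamma>. s \<beta> = t i \<beta>" unfolding P1_def by blast
      show False
      proof (cases "V \<in> P1")
        case True
        then obtain j s' where V1: "V = bd_basic r R j s'" "j \<in> I" "s' \<in> (underS r j \<rightarrow>\<^sub>E R)"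
          "\<forall>\<beta>\<in>underS r \<gamma>. s' \<beta> = t j \<beta>" unfolding P1_def by blast
        show False using P1P1[OF U1 V1] .
      next
        case False
        then have "V \<in> P2" using UV(2) unfolding P_def by blast
        then obtain u where V1: "V = bd_basic r R \<gamma> u" "u \<in> (underS r \<gamma> \<rightarrow>\<^sub>E R)" "u \<notin> t ` I"
          unfolding P2_def by blast
        show False using P1P2[of i s u] f U1 V1 by blast
      qed
    next
      case False
      then have "U \<in> P2" using UV(1) unfolding P_def by blast
      then obtain u where U1: "U = bd_basic r R \<gamma> u" "u \<in> (underS r \<gamma> \<rightarrow>\<^sub>E R)" "u \<notin> t ` I"
        unfolding P2_def by blast
      show False
      proof (cases "V \<in> P1")
        case True
        then obtain j s' where V1: "V = bd_basic r R j s'" "j \<in> I" "s' \<in> (underS r j \<rightarrow>\<^sub>E R)"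
          "\<forall>\<beta>\<in>underS r \<gamma>. s' \<beta> = t j \<beta>" unfolding P1_def by blast
        show False using P1P2[of j s' u] f U1 V1 by blast
      next
        case False
        then have "V \<in> P2" using UV(2) unfolding P_def by blast
        then obtain u' where V1: "V = bd_basic r R \<gamma> u'" "u' \<in> (underS r \<gamma> \<rightarrow>\<^sub>E R)"
          unfolding P2_def by blast
        show False using P2P2[OF U1(1,2) V1] .
      qed
    qed
  qed
  have cover: "\<Union>P = fun_space r R"
  proof
    show "\<Union>P \<subseteq> fun_space r R" using Psub Union_bd_base[OF g, of R] by blast
  next
    show "fun_space r R \<subseteq> \<Union>P"
    proof
      fix f assume f: "f \<in> fun_space r R"
      define u where "u = restrict f (underS r \<gamma>)"
      have u: "u \<in> (underS r \<gamma> \<rightarrow>\<^sub>E R)" "f \<in> bd_basic r R \<gamma> u"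
        unfolding u_def using restrict_in_bd_basic[OF f] by auto
      show "f \<in> \<Union>P"
      proof (cases "u \<in> t ` I")
        case True
        then obtain i where i: "i \<in> I" "u = t i" by blast
        define s where "s = restrict f (underS r i)"
        have s: "s \<in> (underS r i \<rightarrow>\<^sub>E R)" "f \<in> bd_basic r R i s"
          unfolding s_def using restrict_in_bd_basic[OF f] by auto
        have "\<forall>\<beta>\<in>underS r \<gamma>. s \<beta> = t i \<beta>"
        proof
          fix \<beta> assume b: "\<beta> \<in> underS r \<gamma>"
          have "t i \<beta> = u \<beta>" using i(2) by simp
          also have "\<dots> = f \<beta>" using b unfolding u_def by simp
          also have "\<dots> = s \<beta>" using b gsub[OF i(1)] unfolding s_def by auto
          finally show "s \<beta> = t i \<beta>" by simp
        qed
        then have "bd_basic r R i s \<in> P1" unfolding P1_def using i(1) s(1) by blast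
        then show ?thesis using s(2) unfolding P_def by blast
      next
        case False
        then have "bd_basic r R \<gamma> u \<in> P2" unfolding P2_def using u(1) by blast
        then show ?thesis using u(2) unfolding P_def by blast
      qed
    qed
  qed
  have opart: "open_partition (bd_top r R) P"
    unfolding open_partition_def
  proof (intro conjI)
    show "\<forall>U\<in>P. openin (bd_top r R) U \<and> U \<noteq> {}"
    proof
      fix U assume U: "U \<in> P"
      have "\<forall>U\<in>bd_base r R. openin (bd_top r R) U"
        using bd_base_is_base[OF wo, of R] unfolding is_base_def by (rule conjunct1)
      then show "openin (bd_top r R) U \<and> U \<noteq> {}" using Psub Pne[OF U] U by blast
    qed
    show "\<forall>U\<in>P. \<forall>V\<in>P. U \<noteq> V \<longrightarrow> U \<inter> V = {}" using disj by blast
    show "\<Union>P = topspace (bd_top r R)" using cover topspace_bd[OF g, of R] by simp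
  qed
  have lev: "|underS r \<alpha> \<rightarrow>\<^sub>E R| \<le>o |P|" if a: "\<alpha> \<in> Field r" for \<alpha>
  proof -
    obtain z where z: "z \<in> Field r" "|underS r \<alpha>| \<le>o |underS r z - underS r \<gamma>|"
      using shift_lemma[OF cr inf g a] by blast
    obtain h where h: "inj_on h (underS r \<alpha>)" "h ` underS r \<alpha> \<subseteq> underS r z - underS r \<gamma>"
      using z(2) unfolding card_of_ordLeq[symmetric] by blast
    obtain i where i: "i \<in> I" "(z,i) \<in> r" using cof z(1) by blast
    have zi: "underS r z \<subseteq> underS r i" using underS_mono_le[OF wo i(2)] .
    define S where "S u = (\<lambda>x\<in>underS r i. if x \<in> underS r \<gamma> then t i x
        else if x \<in> h ` underS r \<alpha> then u (inv_into (underS r \<alpha>) h x) else r0)" for u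
    define \<Phi> where "\<Phi> u = bd_basic r R i (S u)" for u
    have Su: "S u \<in> (underS r i \<rightarrow>\<^sub>E R)" if u: "u \<in> (underS r \<alpha> \<rightarrow>\<^sub>E R)" for u
    proof -
      have "\<forall>x\<in>underS r i. (if x \<in> underS r \<gamma> then t i x
        else if x \<in> h ` underS r \<alpha> then u (inv_into (underS r \<alpha>) h x) else r0) \<in> R"
      proof
        fix x assume x: "x \<in> underS r i"
        show "(if x \<in> underS r \<gamma> then t i x
          else if x \<in> h ` underS r \<alpha> then u (inv_into (underS r \<alpha>) h x) else r0) \<in> R"
        proof (cases "x \<in> underS r \<gamma>")
          case True
          then show ?thesis using tI[OF i(1)] by auto
        next
          case False
          have "x \<in> h ` underS r \<alpha> \<Longrightarrow> u (inv_into (underS r \<alpha>) h x) \<in> R"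
            using inv_into_into[of x h "underS r \<alpha>"] u by auto
          then show ?thesis using False R(2) by auto
        qed
      qed
      then show ?thesis unfolding S_def restrict_PiE_iff .
    qed
    have PhiP: "\<Phi> u \<in> P" if u: "u \<in> (underS r \<alpha> \<rightarrow>\<^sub>E R)" for u
    proof -
      have "\<forall>\<beta>\<in>underS r \<gamma>. S u \<beta> = t i \<beta>" unfolding S_def using gsub[OF i(1)] by auto
      then have "\<Phi> u \<in> P1" unfolding \<Phi>_def P1_def using i(1) Su[OF u] by auto
      then show ?thesis unfolding P_def by blast
    qed
    have "inj_on \<Phi> (underS r \<alpha> \<rightarrow>\<^sub>E R)"
    proof (rule inj_onI)
      fix u u' assume u: "u \<in> (underS r \<alpha> \<rightarrow>\<^sub>E R)" and u': "u' \<in> (underS r \<alpha> \<rightarrow>\<^sub>E R)"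
        and eq: "\<Phi> u = \<Phi> u'"
      have S: "S u = S u'" using bd_basic_inj[OF Su[OF u] Su[OF u'] R(2)] eq unfolding \<Phi>_def .
      show "u = u'"
      proof (rule PiE_ext[OF u u'])
        fix a assume a: "a \<in> underS r \<alpha>"
        have ha: "h a \<in> underS r i" "h a \<notin> underS r \<gamma>" "h a \<in> h ` underS r \<alpha>"
          using h(2) a zi by auto
        have "S u (h a) = u a" unfolding S_def using ha h(1) a by simp
        moreover have "S u' (h a) = u' a" unfolding S_def using ha h(1) a by simp
        ultimately show "u a = u' a" using S by simp
      qed
    qed
    moreover have "\<Phi> ` (underS r \<alpha> \<rightarrow>\<^sub>E R) \<subseteq> P" using PhiP by blast
    ultimately show ?thesis using card_of_ordLeq[of "underS r \<alpha> \<rightarrow>\<^sub>E R" P] by blast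
  qed
  have "\<forall>\<alpha>\<in>Field r. |underS r \<alpha> \<rightarrow>\<^sub>E R| \<le>o |P|" using lev by blast
  then have "|Sigma (Field r) (\<lambda>\<alpha>. underS r \<alpha> \<rightarrow>\<^sub>E R)| \<le>o |P|"
    by (rule Sigma_le_sup[OF cr inf R])
  then show ?thesis using opart Psub by blast
qed


lemma times_less:
  fixes A :: "'a set" and B :: "'b set" and C :: "'c set"
  assumes inf: "infinite C" and a: "|A| <o |C|" and b: "|B| <o |C|"
  shows "|A \<times> B| <o |C|"
proof -
  have D: "|A <+> B| <o |C|" using card_of_Plus_ordLess_infinite[OF inf a b] .
  show ?thesis
  proof (cases "finite (A <+> B)")
    case True
    then have "finite A" "finite B" by auto
    then have "finite (A \<times> B)" by simp
    then show ?thesis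
      using finite_ordLess_infinite[OF card_of_Well_order card_of_Well_order, unfolded Field_card_of]
        inf by blast
  next
    case False
    have "inj_on (\<lambda>(a,b). (Inl a, Inr b) :: ('a + 'b) \<times> ('a + 'b)) (A \<times> B)"
      by (auto simp: inj_on_def)
    moreover have "(\<lambda>(a,b). (Inl a, Inr b) :: ('a + 'b) \<times> ('a + 'b)) ` (A \<times> B) \<subseteq> (A <+> B) \<times> (A <+> B)"
      by auto
    ultimately have "|A \<times> B| \<le>o |(A <+> B) \<times> (A <+> B)|"
      unfolding card_of_ordLeq[symmetric] by blast
    also have "|(A <+> B) \<times> (A <+> B)| =o |A <+> B|" using card_of_Times_same_infinite[OF False] .
    finally have "|A \<times> B| \<le>o |A <+> B|" .
    then show ?thesis using D by (rule ordLeq_ordLess_trans)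
  qed
qed

lemma bd_base_image:
  "bd_base r R = (\<lambda>(\<alpha>,s). bd_basic r R \<alpha> s) ` Sigma (Field r) (\<lambda>\<alpha>. underS r \<alpha> \<rightarrow>\<^sub>E R)"
  unfolding bd_base_def by auto

lemma weight_part:
  assumes cr: "Card_order r"
    and P: "open_partition (bd_top r R) P" and Psub: "P \<subseteq> bd_base r R"
    and SP: "|Sigma (Field r) (\<lambda>\<alpha>. underS r \<alpha> \<rightarrow>\<^sub>E R)| \<le>o |P|"
  shows "is_weight (bd_top r R) P" "|P| \<le>o |Sigma (Field r) (\<lambda>\<alpha>. underS r \<alpha> \<rightarrow>\<^sub>E R)|"
proof -
  have wo: "Well_order r" using Card_order_wo[OF cr] .
  have base: "is_base (bd_top r R) (bd_base r R)" using bd_base_is_base[OF wo] .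
  have bb: "|bd_base r R| \<le>o |Sigma (Field r) (\<lambda>\<alpha>. underS r \<alpha> \<rightarrow>\<^sub>E R)|"
    unfolding bd_base_image by (rule card_of_image)
  have Pb: "|P| \<le>o |bd_base r R|" using card_of_mono1[OF Psub] .
  show PS: "|P| \<le>o |Sigma (Field r) (\<lambda>\<alpha>. underS r \<alpha> \<rightarrow>\<^sub>E R)|"
    using ordLeq_transitive[OF Pb bb] .
  have bP: "|bd_base r R| \<le>o |P|" using ordLeq_transitive[OF bb SP] .
  have iso: "|bd_base r R| =o |P|" using bP Pb ordIso_iff_ordLeq by blast
  have "\<forall>B. is_base (bd_top r R) B \<longrightarrow> |P| \<le>o |B|"
    using partition_le_base[OF _ P] by blast
  then show "is_weight (bd_top r R) P" unfolding is_weight_def using base iso by blast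
qed

lemma A_le_Sigma:
  assumes "\<alpha> \<in> I"
  shows "|F \<alpha>| \<le>o |Sigma I F|"
proof -
  have "inj_on (\<lambda>s. (\<alpha>,s)) (F \<alpha>)" by (auto simp: inj_on_def)
  moreover have "(\<lambda>s. (\<alpha>,s)) ` F \<alpha> \<subseteq> Sigma I F" using assms by auto
  ultimately show ?thesis unfolding card_of_ordLeq[symmetric] by blast
qed

lemma wcp_same:
  assumes cr: "Card_order r" and inf: "infinite (Field r)"
    and R: "r0 \<noteq> r1" "r0 \<in> R" "r1 \<in> R"
    and P: "open_partition (bd_top r R) P" and Psub: "P \<subseteq> bd_base r R"
    and SP: "|Sigma (Field r) (\<lambda>\<alpha>. underS r \<alpha> \<rightarrow>\<^sub>E R)| \<le>o |P|"
  shows "weight_cexp_partition (bd_top r R) R r"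
proof -
  note W = weight_part[OF cr P Psub SP]
  have c1: "\<forall>\<alpha>\<in>Field r. |underS r \<alpha> \<rightarrow>\<^sub>E R| \<le>o |P|"
  proof
    fix \<alpha> assume "\<alpha> \<in> Field r"
    then show "|underS r \<alpha> \<rightarrow>\<^sub>E R| \<le>o |P|"
      using ordLeq_transitive[OF A_le_Sigma SP] by blast
  qed
  have c2: "|P| \<le>o |C|" if C: "\<forall>\<alpha>\<in>Field r. |underS r \<alpha> \<rightarrow>\<^sub>E R| \<le>o |C|" for C :: "('a \<Rightarrow> 'b) set"
    using ordLeq_transitive[OF W(2) Sigma_le_sup[OF cr inf R C]] .
  have "is_cexp_less R r P" unfolding is_cexp_less_def is_card_sup_def using c1 c2 by blast
  moreover have "|P| =o |P|" by (rule ordIso_refl[OF card_of_Card_order])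
  ultimately show ?thesis unfolding weight_cexp_partition_def using W(1) P by blast
qed

lemma wcp_bool:
  assumes cr: "Card_order r" and inf: "infinite (Field r)"
    and R: "r0 \<noteq> r1" "r0 \<in> R" "r1 \<in> R" and Rlt: "|R| <o |Field r|"
    and P: "open_partition (bd_top r R) P" and Psub: "P \<subseteq> bd_base r R"
    and SP: "|Sigma (Field r) (\<lambda>\<alpha>. underS r \<alpha> \<rightarrow>\<^sub>E R)| \<le>o |P|"
  shows "weight_cexp_partition (bd_top r R) (UNIV :: bool set) r"
proof -
  note W = weight_part[OF cr P Psub SP]
  have boolR: "|underS r \<alpha> \<rightarrow>\<^sub>E (UNIV :: bool set)| \<le>o |underS r \<alpha> \<rightarrow>\<^sub>E R|" for \<alpha>
  proof -
    define h where "h u = (\<lambda>x\<in>underS r \<alpha>. if u x then r1 else r0)" for u :: "'a \<Rightarrow> bool"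
    have "inj_on h (underS r \<alpha> \<rightarrow>\<^sub>E (UNIV :: bool set))"
    proof (rule inj_onI)
      fix u v assume u: "u \<in> underS r \<alpha> \<rightarrow>\<^sub>E (UNIV :: bool set)"
        and v: "v \<in> underS r \<alpha> \<rightarrow>\<^sub>E (UNIV :: bool set)" and e: "h u = h v"
      show "u = v"
      proof (rule PiE_ext[OF u v])
        fix x assume x: "x \<in> underS r \<alpha>"
        have "h u x = h v x" using e by simp
        then show "u x = v x" using x R(1) unfolding h_def by (auto split: if_splits)
      qed
    qed
    moreover have "h ` (underS r \<alpha> \<rightarrow>\<^sub>E (UNIV :: bool set)) \<subseteq> (underS r \<alpha> \<rightarrow>\<^sub>E R)"
      unfolding h_def using R by auto
    ultimately show ?thesis unfolding card_of_ordLeq[symmetric] by blast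
  qed
  have c1: "\<forall>\<alpha>\<in>Field r. |underS r \<alpha> \<rightarrow>\<^sub>E (UNIV :: bool set)| \<le>o |P|"
  proof
    fix \<alpha> assume "\<alpha> \<in> Field r"
    then show "|underS r \<alpha> \<rightarrow>\<^sub>E (UNIV :: bool set)| \<le>o |P|"
      using ordLeq_transitive[OF boolR ordLeq_transitive[OF A_le_Sigma SP]] by blast
  qed
  have c2: "|P| \<le>o |C|"
    if C: "\<forall>\<alpha>\<in>Field r. |underS r \<alpha> \<rightarrow>\<^sub>E (UNIV :: bool set)| \<le>o |C|" for C :: "('a \<Rightarrow> bool) set"
  proof -
    have "|underS r \<alpha> \<rightarrow>\<^sub>E R| \<le>o |C|" if a: "\<alpha> \<in> Field r" for \<alpha>
    proof -
      have ul: "|underS r \<alpha>| <o |Field r|"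
        using ordLess_ordIso_trans[OF card_of_underS[OF cr a]
          ordIso_symmetric[OF card_of_Field_ordIso[OF cr]]] .
      have "|underS r \<alpha> \<times> R| <o |Field r|" using times_less[OF inf ul Rlt] .
      then obtain \<beta> where b: "\<beta> \<in> Field r" "|underS r \<alpha> \<times> R| =o |underS r \<beta>|"
        using card_less_underS[OF cr] by blast
      obtain g where g: "inj_on g (underS r \<alpha> \<times> R)" "g ` (underS r \<alpha> \<times> R) \<subseteq> underS r \<beta>"
        using ordIso_imp_ordLeq[OF b(2)] unfolding card_of_ordLeq[symmetric] by blast
      define \<Psi> where "\<Psi> f = (\<lambda>d\<in>underS r \<beta>. d \<in> g ` ((\<lambda>a. (a, f a)) ` underS r \<alpha>))" for f
      have "inj_on \<Psi> (underS r \<alpha> \<rightarrow>\<^sub>E R)"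
      proof (rule inj_onI)
        fix f f' assume f: "f \<in> underS r \<alpha> \<rightarrow>\<^sub>E R" and f': "f' \<in> underS r \<alpha> \<rightarrow>\<^sub>E R"
          and e: "\<Psi> f = \<Psi> f'"
        show "f = f'"
        proof (rule PiE_ext[OF f f'])
          fix a assume a: "a \<in> underS r \<alpha>"
          have fa: "f a \<in> R" using f a by auto
          have d: "g (a, f a) \<in> underS r \<beta>" using g(2) a fa by auto
          have "\<Psi> f (g (a, f a))" unfolding \<Psi>_def using d a by auto
          then have "\<Psi> f' (g (a, f a))" using e by simp
          then obtain a' where a': "a' \<in> underS r \<alpha>" "g (a, f a) = g (a', f' a')"
            unfolding \<Psi>_def using d by auto
          have "f' a' \<in> R" using f' a'(1) by auto
          then have "(a, f a) = (a', f' a')"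
            using inj_onD[OF g(1) a'(2)] a a'(1) fa by auto
          then show "f a = f' a" by auto
        qed
      qed
      moreover have "\<Psi> ` (underS r \<alpha> \<rightarrow>\<^sub>E R) \<subseteq> (underS r \<beta> \<rightarrow>\<^sub>E (UNIV :: bool set))"
        unfolding \<Psi>_def by auto
      ultimately have "|underS r \<alpha> \<rightarrow>\<^sub>E R| \<le>o |underS r \<beta> \<rightarrow>\<^sub>E (UNIV :: bool set)|"
        unfolding card_of_ordLeq[symmetric] by blast
      also have "|underS r \<beta> \<rightarrow>\<^sub>E (UNIV :: bool set)| \<le>o |C|" using C b(1) by blast
      finally show ?thesis .
    qed
    then have "|Sigma (Field r) (\<lambda>\<alpha>. underS r \<alpha> \<rightarrow>\<^sub>E R)| \<le>o |C|"
      using Sigma_le_sup[OF cr inf R] by blast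
    then show ?thesis using ordLeq_transitive[OF W(2)] by blast
  qed
  have "is_cexp_less (UNIV :: bool set) r P" unfolding is_cexp_less_def is_card_sup_def using c1 c2 by blast
  moreover have "|P| =o |P|" by (rule ordIso_refl[OF card_of_Card_order])
  ultimately show ?thesis unfolding weight_cexp_partition_def using W(1) P by blast
qed


lemma case_a:
  assumes cr: "Card_order r" and inf: "infinite (Field r)" and r0: "r0 \<in> R"
    and le: "|Field r| \<le>o |R|"
  shows "\<exists>\<gamma> I t. \<gamma> \<in> Field r \<and> I \<subseteq> Field r \<and> (\<forall>i\<in>I. (\<gamma>,i) \<in> r \<and> i \<noteq> \<gamma>) \<and>
     (\<forall>a\<in>Field r. \<exists>i\<in>I. (a,i) \<in> r) \<and> inj_on t I \<and> t ` I \<subseteq> (underS r \<gamma> \<rightarrow>\<^sub>E R)"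
proof -
  obtain z where z: "z \<in> Field r" using inf by (metis finite.emptyI ex_in_conv)
  obtain \<gamma> where g: "\<gamma> \<in> Field r" "(z,\<gamma>) \<in> r" "z \<noteq> \<gamma>" using strict_above[OF cr inf z] by blast
  have zg: "z \<in> underS r \<gamma>" using g unfolding underS_def by simp
  obtain e where e: "inj_on e (Field r)" "e ` Field r \<subseteq> R"
    using le unfolding card_of_ordLeq[symmetric] by blast
  define I where "I = {i\<in>Field r. (\<gamma>,i) \<in> r \<and> i \<noteq> \<gamma>}"
  define t where "t i = (\<lambda>x\<in>underS r \<gamma>. if x = z then e i else r0)" for i
  have c1: "I \<subseteq> Field r" "\<forall>i\<in>I. (\<gamma>,i) \<in> r \<and> i \<noteq> \<gamma>" unfolding I_def by auto
  have c2: "\<forall>a\<in>Field r. \<exists>i\<in>I. (a,i) \<in> r"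
  proof
    fix a assume a: "a \<in> Field r"
    obtain i where "i \<in> Field r" "(a,i) \<in> r" "(\<gamma>,i) \<in> r" "i \<noteq> \<gamma>"
      using above_two[OF cr inf a g(1)] by blast
    then show "\<exists>i\<in>I. (a,i) \<in> r" unfolding I_def by blast
  qed
  have c3: "inj_on t I"
  proof (rule inj_onI)
    fix i j assume ij: "i \<in> I" "j \<in> I" "t i = t j"
    then have "t i z = t j z" by simp
    then have "e i = e j" using zg unfolding t_def by simp
    then show "i = j" using e(1) ij c1(1) unfolding inj_on_def by blast
  qed
  have c4: "t ` I \<subseteq> (underS r \<gamma> \<rightarrow>\<^sub>E R)"
  proof
    fix f assume "f \<in> t ` I"
    then obtain i where i: "i \<in> I" "f = t i" by blast
    have "e i \<in> R" using e(2) c1(1) i(1) by blast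
    then show "f \<in> (underS r \<gamma> \<rightarrow>\<^sub>E R)" unfolding i(2) t_def using r0 by auto
  qed
  show ?thesis using g(1) c1 c2 c3 c4 by blast
qed

lemma case_b:
  assumes cr: "Card_order r" and inf: "infinite (Field r)"
    and R: "r0 \<noteq> r1" "r0 \<in> R" "r1 \<in> R"
    and K: "K \<subseteq> Field r" "cofinal K r" "|K| <o |Field r|"
  shows "\<exists>\<gamma> I t. \<gamma> \<in> Field r \<and> I \<subseteq> Field r \<and> (\<forall>i\<in>I. (\<gamma>,i) \<in> r \<and> i \<noteq> \<gamma>) \<and>
     (\<forall>a\<in>Field r. \<exists>i\<in>I. (a,i) \<in> r) \<and> inj_on t I \<and> t ` I \<subseteq> (underS r \<gamma> \<rightarrow>\<^sub>E R)"
proof -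
  have wo: "Well_order r" using Card_order_wo[OF cr] .
  obtain \<gamma> where g: "\<gamma> \<in> Field r" "|K| =o |underS r \<gamma>|" using card_less_underS[OF cr K(3)] by blast
  obtain e where e: "inj_on e K" "e ` K \<subseteq> underS r \<gamma>"
    using ordIso_imp_ordLeq[OF g(2)] unfolding card_of_ordLeq[symmetric] by blast
  define I where "I = {i\<in>K. (\<gamma>,i) \<in> r \<and> i \<noteq> \<gamma>}"
  define t where "t i = (\<lambda>x\<in>underS r \<gamma>. if x = e i then r1 else r0)" for i
  have c1: "I \<subseteq> Field r" "\<forall>i\<in>I. (\<gamma>,i) \<in> r \<and> i \<noteq> \<gamma>" unfolding I_def using K(1) by auto
  have c2: "\<forall>a\<in>Field r. \<exists>i\<in>I. (a,i) \<in> r"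
  proof
    fix a assume a: "a \<in> Field r"
    obtain b0 where b0: "b0 \<in> Field r" "(a,b0) \<in> r" "(\<gamma>,b0) \<in> r" "b0 \<noteq> \<gamma>"
      using above_two[OF cr inf a g(1)] by blast
    obtain b where b: "b \<in> K" "b0 \<noteq> b" "(b0,b) \<in> r" using K(2) b0(1) unfolding cofinal_def by blast
    have ab: "(a,b) \<in> r" using wo_trans[OF wo b0(2) b(3)] .
    have gb: "(\<gamma>,b) \<in> r" using wo_trans[OF wo b0(3) b(3)] .
    have "b \<noteq> \<gamma>"
    proof
      assume "b = \<gamma>"
      then have "(b0,\<gamma>) \<in> r" using b(3) by simp
      then show False using wo_antisym[OF wo b0(3)] b0(4) by simp
    qed
    then have "b \<in> I" unfolding I_def using b(1) gb by blast
    then show "\<exists>i\<in>I. (a,i) \<in> r" using ab by blast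
  qed
  have c3: "inj_on t I"
  proof (rule inj_onI)
    fix i j assume ij: "i \<in> I" "j \<in> I" "t i = t j"
    have iK: "i \<in> K" "j \<in> K" using ij unfolding I_def by auto
    have ei: "e i \<in> underS r \<gamma>" using e(2) iK by blast
    have "t i (e i) = t j (e i)" using ij by simp
    then have "r1 = (if e i = e j then r1 else r0)" using ei unfolding t_def by simp
    then have "e i = e j" using R(1) by (auto split: if_splits)
    then show "i = j" using e(1) iK unfolding inj_on_def by blast
  qed
  have c4: "t ` I \<subseteq> (underS r \<gamma> \<rightarrow>\<^sub>E R)"
    unfolding t_def using R by auto
  show ?thesis using g(1) c1 c2 c3 c4 by blast
qed

lemma full_same:
  assumes cr: "Card_order r" and inf: "infinite (Field r)"
    and R: "r0 \<noteq> r1" "r0 \<in> R" "r1 \<in> R"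
    and ex: "\<exists>\<gamma> I t. \<gamma> \<in> Field r \<and> I \<subseteq> Field r \<and> (\<forall>i\<in>I. (\<gamma>,i) \<in> r \<and> i \<noteq> \<gamma>) \<and>
     (\<forall>a\<in>Field r. \<exists>i\<in>I. (a,i) \<in> r) \<and> inj_on t I \<and> t ` I \<subseteq> (underS r \<gamma> \<rightarrow>\<^sub>E R)"
  shows "weight_cexp_partition (bd_top r R) R r"
proof -
  obtain \<gamma> I t where h: "\<gamma> \<in> Field r" "I \<subseteq> Field r" "\<forall>i\<in>I. (\<gamma>,i) \<in> r \<and> i \<noteq> \<gamma>"
     "\<forall>a\<in>Field r. \<exists>i\<in>I. (a,i) \<in> r" "inj_on t I" "t ` I \<subseteq> (underS r \<gamma> \<rightarrow>\<^sub>E R)"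
    using ex by blast
  obtain P where P: "open_partition (bd_top r R) P" "P \<subseteq> bd_base r R"
     "|Sigma (Field r) (\<lambda>\<alpha>. underS r \<alpha> \<rightarrow>\<^sub>E R)| \<le>o |P|"
    using partition_exists[OF cr inf R h] by blast
  show ?thesis using wcp_same[OF cr inf R P] .
qed

lemma full_bool:
  assumes cr: "Card_order r" and inf: "infinite (Field r)"
    and R: "r0 \<noteq> r1" "r0 \<in> R" "r1 \<in> R" and Rlt: "|R| <o |Field r|"
    and ex: "\<exists>\<gamma> I t. \<gamma> \<in> Field r \<and> I \<subseteq> Field r \<and> (\<forall>i\<in>I. (\<gamma>,i) \<in> r \<and> i \<noteq> \<gamma>) \<and>
     (\<forall>a\<in>Field r. \<exists>i\<in>I. (a,i) \<in> r) \<and> inj_on t I \<and> t ` I \<subseteq> (underS r \<gamma> \<rightarrow>\<^sub>E R)"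
  shows "weight_cexp_partition (bd_top r R) (UNIV :: bool set) r"
proof -
  obtain \<gamma> I t where h: "\<gamma> \<in> Field r" "I \<subseteq> Field r" "\<forall>i\<in>I. (\<gamma>,i) \<in> r \<and> i \<noteq> \<gamma>"
     "\<forall>a\<in>Field r. \<exists>i\<in>I. (a,i) \<in> r" "inj_on t I" "t ` I \<subseteq> (underS r \<gamma> \<rightarrow>\<^sub>E R)"
    using ex by blast
  obtain P where P: "open_partition (bd_top r R) P" "P \<subseteq> bd_base r R"
     "|Sigma (Field r) (\<lambda>\<alpha>. underS r \<alpha> \<rightarrow>\<^sub>E R)| \<le>o |P|"
    using partition_exists[OF cr inf R h] by blast
  show ?thesis using wcp_bool[OF cr inf R Rlt P] .
qed

lemma two_elems:
  assumes "infinite A"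
  obtains x y where "x \<in> A" "y \<in> A" "x \<noteq> y"
proof -
  obtain x where x: "x \<in> A" using assms by (metis finite.emptyI ex_in_conv)
  have "infinite (A - {x})" using assms by simp
  then obtain y where y: "y \<in> A - {x}" by (metis finite.emptyI ex_in_conv)
  show ?thesis using that[of x y] x y by blast
qed

theorem mainTheorem2:
  fixes k :: "'a rel" and m :: "'b rel"
  assumes "Cinfinite k" and "regularCard k"
    and "Cinfinite m" and "k <o m" and "cof_is m k"
  shows "weight_cexp_partition (bd_top k (Field m)) (Field m) k \<and>
     weight_cexp_partition (bd_top m (UNIV :: bool set)) (UNIV :: bool set) m \<and>
     weight_cexp_partition (bd_top m (Field k)) (UNIV :: bool set) m \<and>
     weight_cexp_partition (bd_top m (Field m)) (Field m) m"
proof -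
  have ck: "Card_order k" and ik: "infinite (Field k)" using assms(1) unfolding cinfinite_def by auto
  have cm: "Card_order m" and im: "infinite (Field m)" using assms(3) unfolding cinfinite_def by auto
  have km: "k <o m" using assms(4) .
  obtain m0 m1 where M: "m0 \<noteq> m1" "m0 \<in> Field m" "m1 \<in> Field m"
    using two_elems[OF im] by metis
  obtain k0 k1 where KK: "k0 \<noteq> k1" "k0 \<in> Field k" "k1 \<in> Field k"
    using two_elems[OF ik] by metis
  have B: "False \<noteq> True" "False \<in> (UNIV :: bool set)" "True \<in> (UNIV :: bool set)" by auto
  have mF: "m =o |Field m|" using ordIso_symmetric[OF card_of_Field_ordIso[OF cm]] .
  have kle: "|Field k| \<le>o |Field m|" using card_of_mono2[OF ordLess_imp_ordLeq[OF km]] .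
  have klt: "|Field k| <o |Field m|" using ordLess_ordIso_trans[OF ordLess_Field[OF km] mF] .
  obtain K where K: "K \<subseteq> Field m" "cofinal K m" "|K| =o k" using assms(5) unfolding cof_is_def by blast
  have Klt: "|K| <o |Field m|" using ordLess_ordIso_trans[OF ordIso_ordLess_trans[OF K(3) km] mF] .
  have p1: "weight_cexp_partition (bd_top k (Field m)) (Field m) k"
    using full_same[OF ck ik M case_a[OF ck ik M(2) kle]] .
  have p2: "weight_cexp_partition (bd_top m (UNIV :: bool set)) (UNIV :: bool set) m"
    using full_same[OF cm im B case_b[OF cm im B K(1,2) Klt]] .
  have p3: "weight_cexp_partition (bd_top m (Field k)) (UNIV :: bool set) m"
    using full_bool[OF cm im KK klt case_b[OF cm im KK K(1,2) Klt]] .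
  have p4: "weight_cexp_partition (bd_top m (Field m)) (Field m) m"
    using full_same[OF cm im M case_a[OF cm im M(2) ordLeq_refl[OF card_of_Card_order]]] .
  show ?thesis using p1 p2 p3 p4 by blast
qed

end
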